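(* Let $A$ be a nonempty set of positive integers and let $n$ be a positive integer. Then (a) $\displaystyle cl_A(n)=\sum_{k=0}^{n-1}cl_A(k)\,\tau^s_A(n-k)$; (b) $\displaystyle\sum_{k=0}^{n}cl_A(k)\,q_A(n-k)-\sum_{t=0}^{n-1}cl_A(t)\,N^q_A(n-t)=q_A(n)$.
   Context: A composition of $m$ is an ordered sequence of positive integers summing to $m$; it is Carlitz if each part differs from its adjacent parts. $cl_A(m)$ is the number of Carlitz compositions of $m$ with all parts in $A$, with $cl_A(0)=1$. $q_A(m)$ is the number of partitions of $m$ into pairwise distinct parts from $A$ ($q_A(0)=1$), and $N^q_A(m)$ is the total number of parts over all such partitions. $\tau^s_A(m)=\sum_{a\in A,\,a\mid m}(-1)^{m/a-1}$. *)

theory Defs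
  imports Main
begin

definition carlitz_comps :: "nat set \<Rightarrow> nat \<Rightarrow> nat list set" where
  "carlitz_comps A m = {xs. (\<forall>x\<in>set xs. 0 < x \<and> x \<in> A) \<and> sum_list xs = m
      \<and> (\<forall>i. Suc i < length xs \<longrightarrow> xs ! i \<noteq> xs ! Suc i)}"

definition cl :: "nat set \<Rightarrow> nat \<Rightarrow> nat" where
  "cl A m = card (carlitz_comps A m)"

(* partitions of m into pairwise distinct parts from A, represented as finite sets of parts *)
definition distinct_parts :: "nat set \<Rightarrow> nat \<Rightarrow> nat set set" where
  "distinct_parts A m = {S. finite S \<and> S \<subseteq> A \<and> (\<forall>x\<in>S. 0 < x) \<and> \<Sum>S = m}"

definition q :: "nat set \<Rightarrow> nat \<Rightarrow> nat" where
  "q A m = card (distinct_parts A m)"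

definition Nq :: "nat set \<Rightarrow> nat \<Rightarrow> nat" where
  "Nq A m = (\<Sum>S\<in>distinct_parts A m. card S)"

definition tau_s :: "nat set \<Rightarrow> nat \<Rightarrow> int" where
  "tau_s A m = (\<Sum>a\<in>{a\<in>A. 0 < a \<and> a dvd m}. (-1) ^ (m div a - 1))"

end

theory Submission
  imports Defs
begin

lemma alt_rec:
  fixes f F :: "nat \<Rightarrow> int"
  assumes a: "0 < a" and rec: "\<And>m. f m = (if m < a then 0 else F (m - a) - f (m - a))"
  shows "f m = (\<Sum>j=1..m div a. (-1)^(j-1) * F (m - j*a))"
proof (induction m rule: less_induct)
  case (less m)
  show ?case
  proof (cases "m < a")
    case True
    then show ?thesis using rec[of m] by simp
  next
    case False
    then obtain m' where m: "m = m' + a" by (metis add.commute le_add_diff_inverse not_less)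
    define d where "d = m' div a"
    have md: "m div a = Suc d" using a m d_def by (simp add: div_add_self2)
    have IH: "f m' = (\<Sum>j=1..d. (-1)^(j-1) * F (m' - j*a))" using less[of m'] a m d_def by simp
    have "(\<Sum>j=1..m div a. (-1)^(j-1) * F (m - j*a))
        = F m' + (\<Sum>j=Suc 1..Suc d. (-1)^(j-1) * F (m - j*a))"
      unfolding md by (subst sum.atLeast_Suc_atMost) (auto simp: m)
    also have "(\<Sum>j=Suc 1..Suc d. (-1)^(j-1) * F (m - j*a)) = (\<Sum>j=1..d. (-1)^(Suc j-1) * F (m - Suc j*a))"
      by (rule sum.shift_bounds_cl_Suc_ivl)
    also have "\<dots> = - (\<Sum>j=1..d. (-1)^(j-1) * F (m' - j*a))"
      unfolding sum_negf[symmetric]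
    proof (rule sum.cong)
      fix j assume "j \<in> {1..d}"
      then obtain i where j: "j = Suc i" by (cases j) auto
      show "(-1)^(Suc j-1) * F (m - Suc j*a) = - ((-1)^(j-1) * F (m' - j*a))"
        using j m by (simp add: algebra_simps)
    qed simp
    finally show ?thesis using rec[of m] False m IH by simp
  qed
qed

lemma exchange:
  fixes F :: "nat \<Rightarrow> int"
  assumes m: "0 < m" and A: "\<forall>a\<in>A. 0 < a"
  shows "(\<Sum>a\<in>{a\<in>A. 0<a \<and> a\<le>m}. \<Sum>j=1..m div a. (-1)^(j-1) * F (m - j*a))
       = (\<Sum>k=0..m-1. F k * tau_s A (m-k))"
proof -
  define B where "B = {a\<in>A. 0<a \<and> a\<le>m}"
  have finB: "finite B" unfolding B_def by (rule finite_subset[of _ "{..m}"]) auto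
  have step1: "(\<Sum>j=1..m div a. (-1)^(j-1) * F (m - j*a))
      = (\<Sum>k\<in>{k\<in>{0..m-1}. a dvd (m-k)}. (-1)^((m-k) div a - 1) * F k)" if aB: "a \<in> B" for a
  proof (rule sum.reindex_bij_witness[where i="\<lambda>k. (m-k) div a" and j="\<lambda>j. m - j*a"])
    have a0: "0 < a" using aB B_def by auto
    fix j assume j: "j \<in> {1..m div a}"
    have "j * a \<le> m" using j by (meson atLeastAtMost_iff le_trans mult_le_mono1 div_times_less_eq_dividend)
    moreover have "0 < j*a" using j a0 by auto
    ultimately have "m - j*a \<le> m - 1" by linarith
    with \<open>j*a \<le> m\<close> \<open>0 < j*a\<close> show "(m - (m - j*a)) div a = j" "m - j*a \<in> {k\<in>{0..m-1}. a dvd (m-k)}"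
      "(-1)^((m - (m - j * a)) div a - 1) * F (m - j * a) = (-1)^(j-1) * F (m - j*a)"
      using a0 by auto
  next
    have a0: "0 < a" using aB B_def by auto
    fix k assume k: "k \<in> {k\<in>{0..m-1}. a dvd (m-k)}"
    then obtain c where c: "m - k = a * c" by auto
    have "c > 0" using k c m by (cases c) auto
    have "c \<le> m div a" using c a0 m k
      by (metis div_le_mono nonzero_mult_div_cancel_left diff_le_self not_gr_zero)
    then show "m - (m - k) div a * a = k" "(m - k) div a \<in> {1..m div a}"
      using c a0 k \<open>c>0\<close> by (auto simp: mult.commute)
  qed
  have "(\<Sum>a\<in>B. \<Sum>j=1..m div a. (-1)^(j-1) * F (m - j*a))
      = (\<Sum>a\<in>B. \<Sum>k\<in>{k\<in>{0..m-1}. a dvd (m-k)}. (-1)^((m-k) div a - 1) * F k)"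
    using step1 by simp
  also have "\<dots> = (\<Sum>k\<in>{0..m-1}. \<Sum>a\<in>{a\<in>B. a dvd (m-k)}. (-1)^((m-k) div a - 1) * F k)"
    by (rule sum.swap_restrict) (use finB in auto)
  also have "\<dots> = (\<Sum>k=0..m-1. F k * tau_s A (m-k))"
  proof (rule sum.cong)
    fix k assume k: "k \<in> {0..m-1}"
    have "{a\<in>B. a dvd (m-k)} = {a\<in>A. 0 < a \<and> a dvd (m-k)}"
      using k m by (auto simp: B_def dest: dvd_imp_le)
    then show "(\<Sum>a\<in>{a\<in>B. a dvd (m-k)}. (-1)^((m-k) div a - 1) * F k) = F k * tau_s A (m-k)"
      by (simp add: tau_s_def sum_distrib_left mult.commute)
  qed simp
  finally show ?thesis by (simp add: B_def)
qed

lemma adj_Cons: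
  "(\<forall>i. Suc i < length (x#ys) \<longrightarrow> (x#ys)!i \<noteq> (x#ys)!Suc i) \<longleftrightarrow>
   ((ys = [] \<or> x \<noteq> hd ys) \<and> (\<forall>i. Suc i < length ys \<longrightarrow> ys!i \<noteq> ys!Suc i))"
proof
  assume H: "\<forall>i. Suc i < length (x#ys) \<longrightarrow> (x#ys)!i \<noteq> (x#ys)!Suc i"
  have "ys = [] \<or> x \<noteq> hd ys" using H[rule_format, of 0] by (cases ys) auto
  moreover have "\<forall>i. Suc i < length ys \<longrightarrow> ys!i \<noteq> ys!Suc i"
  proof (intro allI impI)
    fix i assume "Suc i < length ys"
    then show "ys!i \<noteq> ys!Suc i" using H[rule_format, of "Suc i"] by simp
  qed
  ultimately show "(ys = [] \<or> x \<noteq> hd ys) \<and> (\<forall>i. Suc i < length ys \<longrightarrow> ys!i \<noteq> ys!Suc i)" by blast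
next
  assume H: "(ys = [] \<or> x \<noteq> hd ys) \<and> (\<forall>i. Suc i < length ys \<longrightarrow> ys!i \<noteq> ys!Suc i)"
  show "\<forall>i. Suc i < length (x#ys) \<longrightarrow> (x#ys)!i \<noteq> (x#ys)!Suc i"
  proof (intro allI impI)
    fix i assume "Suc i < length (x#ys)"
    then show "(x#ys)!i \<noteq> (x#ys)!Suc i" using H by (cases i) (auto simp: hd_conv_nth)
  qed
qed

lemma length_le_sum: "\<forall>x\<in>set xs. 0 < (x::nat) \<Longrightarrow> length xs \<le> sum_list xs"
  by (induction xs) auto

lemma finite_cc: "finite (carlitz_comps A n)"
proof (rule finite_subset)
  show "carlitz_comps A n \<subseteq> {xs. set xs \<subseteq> {..n} \<and> length xs \<le> n}"
    using length_le_sum member_le_sum_list by (fastforce simp: carlitz_comps_def)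
  show "finite {xs. set xs \<subseteq> {..n} \<and> length xs \<le> n}"
    by (rule finite_lists_length_le) simp
qed

lemma cc_Cons: "(x#ys) \<in> carlitz_comps A n \<longleftrightarrow>
   0 < x \<and> x \<in> A \<and> x + sum_list ys = n \<and> (ys = [] \<or> x \<noteq> hd ys) \<and> ys \<in> carlitz_comps A (sum_list ys)"
  unfolding carlitz_comps_def mem_Collect_eq adj_Cons by auto

lemma cc_sum: "ys \<in> carlitz_comps A k \<Longrightarrow> sum_list ys = k"
  by (simp add: carlitz_comps_def)

definition hh :: "nat set \<Rightarrow> nat \<Rightarrow> nat \<Rightarrow> nat" where
  "hh A a n = card {xs\<in>carlitz_comps A n. xs \<noteq> [] \<and> hd xs = a}"

lemma cl_split:
  assumes "0 < n"
  shows "cl A n = (\<Sum>a\<in>{a\<in>A. 0<a \<and> a\<le>n}. hh A a n)"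
proof -
  have eq: "carlitz_comps A n = (\<Union>a\<in>{a\<in>A. 0<a \<and> a\<le>n}. {xs\<in>carlitz_comps A n. xs \<noteq> [] \<and> hd xs = a})"
  proof (rule set_eqI, rule iffI)
    fix xs assume xs: "xs \<in> carlitz_comps A n"
    then have "xs \<noteq> []" using assms by (auto simp: carlitz_comps_def)
    then have "hd xs \<in> set xs" by simp
    then have "hd xs \<in> A \<and> 0 < hd xs \<and> hd xs \<le> n"
      using xs member_le_sum_list[of "hd xs" xs] by (auto simp: carlitz_comps_def)
    then show "xs \<in> (\<Union>a\<in>{a\<in>A. 0<a \<and> a\<le>n}. {xs\<in>carlitz_comps A n. xs \<noteq> [] \<and> hd xs = a})"
      using xs \<open>xs \<noteq> []\<close> by auto
  qed auto
  have "cl A n = (\<Sum>a\<in>{a\<in>A. 0<a \<and> a\<le>n}. card {xs\<in>carlitz_comps A n. xs \<noteq> [] \<and> hd xs = a})"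
    unfolding cl_def
    by (subst eq, rule card_UN_disjoint) (auto intro: finite_subset[OF _ finite_cc] finite_subset[of _ "{..n}"])
  then show ?thesis by (simp add: hh_def)
qed

lemma hh_rec:
  assumes a: "0 < a" "a \<in> A"
  shows "int (hh A a m) = (if m < a then 0 else int (cl A (m - a)) - int (hh A a (m - a)))"
proof (cases "m < a")
  case True
  have "{xs\<in>carlitz_comps A m. xs \<noteq> [] \<and> hd xs = a} = {}"
  proof (rule ccontr)
    assume "{xs\<in>carlitz_comps A m. xs \<noteq> [] \<and> hd xs = a} \<noteq> {}"
    then obtain xs where xs: "xs \<in> carlitz_comps A m" "xs \<noteq> []" "hd xs = a" by auto
    then have "a \<le> m" using member_le_sum_list[of "hd xs" xs] by (auto simp: carlitz_comps_def)
    then show False using True by simp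
  qed
  then show ?thesis using True by (simp only: hh_def card.empty) simp
next
  case False
  define k where "k = m - a"
  have m: "m = k + a" using False k_def by simp
  have img: "{xs\<in>carlitz_comps A m. xs \<noteq> [] \<and> hd xs = a}
      = (\<lambda>ys. a # ys) ` (carlitz_comps A k - {xs\<in>carlitz_comps A k. xs \<noteq> [] \<and> hd xs = a})"
  proof (rule set_eqI, rule iffI)
    fix xs assume xs: "xs \<in> {xs\<in>carlitz_comps A m. xs \<noteq> [] \<and> hd xs = a}"
    then obtain ys where ys: "xs = a # ys" by (cases xs) auto
    have "ys \<in> carlitz_comps A k - {xs\<in>carlitz_comps A k. xs \<noteq> [] \<and> hd xs = a}"
      using xs unfolding ys m by (auto simp: cc_Cons)
    then show "xs \<in> (\<lambda>ys. a # ys) ` (carlitz_comps A k - {xs\<in>carlitz_comps A k. xs \<noteq> [] \<and> hd xs = a})"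
      using ys by blast
  next
    fix xs assume "xs \<in> (\<lambda>ys. a # ys) ` (carlitz_comps A k - {xs\<in>carlitz_comps A k. xs \<noteq> [] \<and> hd xs = a})"
    then obtain ys where ys: "xs = a # ys" "ys \<in> carlitz_comps A k - {xs\<in>carlitz_comps A k. xs \<noteq> [] \<and> hd xs = a}"
      by blast
    then show "xs \<in> {xs\<in>carlitz_comps A m. xs \<noteq> [] \<and> hd xs = a}"
      using a cc_sum[OF ys(2)[THEN DiffD1]] unfolding m by (auto simp: cc_Cons)
  qed
  have "hh A a m = card (carlitz_comps A k - {xs\<in>carlitz_comps A k. xs \<noteq> [] \<and> hd xs = a})"
    unfolding hh_def img by (rule card_image) simp
  also have "\<dots> = cl A k - hh A a k"
    unfolding cl_def hh_def by (rule card_Diff_subset) (auto intro: finite_subset[OF _ finite_cc])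
  finally have "hh A a m = cl A k - hh A a k" .
  moreover have "hh A a k \<le> cl A k"
    unfolding cl_def hh_def by (rule card_mono[OF finite_cc]) auto
  ultimately show ?thesis using False k_def by simp
qed

lemma dp_le: "S \<in> distinct_parts A m \<Longrightarrow> x \<in> S \<Longrightarrow> x \<le> m"
  unfolding distinct_parts_def by (auto intro: member_le_sum)

lemma finite_dp: "finite (distinct_parts A m)"
proof (rule finite_subset)
  show "distinct_parts A m \<subseteq> Pow {..m}" using dp_le by auto
qed simp

definition pp :: "nat set \<Rightarrow> nat \<Rightarrow> nat \<Rightarrow> nat" where
  "pp A a m = card {S\<in>distinct_parts A m. a \<in> S}"

lemma Nq_split:
  "Nq A m = (\<Sum>a\<in>{a\<in>A. 0<a \<and> a\<le>m}. pp A a m)"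
proof -
  define B where "B = {a\<in>A. 0<a \<and> a\<le>m}"
  have finB: "finite B" unfolding B_def by (rule finite_subset[of _ "{..m}"]) auto
  have "Nq A m = (\<Sum>S\<in>distinct_parts A m. \<Sum>a\<in>B. if a \<in> S then 1 else 0)"
    unfolding Nq_def
  proof (rule sum.cong)
    fix S assume S: "S \<in> distinct_parts A m"
    have "S \<subseteq> B" using S dp_le[OF S] by (auto simp: distinct_parts_def B_def)
    then have "B \<inter> S = S" by blast
    then show "card S = (\<Sum>a\<in>B. if a \<in> S then 1 else 0)"
      using finB by (simp add: sum.If_cases)
  qed simp
  also have "\<dots> = (\<Sum>a\<in>B. \<Sum>S\<in>distinct_parts A m. if a \<in> S then 1 else 0)"
    by (rule sum.swap)
  also have "\<dots> = (\<Sum>a\<in>B. pp A a m)"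
  proof (rule sum.cong)
    fix a
    have "distinct_parts A m \<inter> {S. a \<in> S} = {S\<in>distinct_parts A m. a \<in> S}" by blast
    then show "(\<Sum>S\<in>distinct_parts A m. if a \<in> S then 1 else 0) = pp A a m"
      using finite_dp[of A m] by (simp add: sum.If_cases pp_def)
  qed simp
  finally show ?thesis by (simp add: B_def)
qed

lemma pp_rec:
  assumes a: "0 < a" "a \<in> A"
  shows "int (pp A a m) = (if m < a then 0 else int (q A (m - a)) - int (pp A a (m - a)))"
proof (cases "m < a")
  case True
  have "{S\<in>distinct_parts A m. a \<in> S} = {}" using True dp_le by fastforce
  then show ?thesis using True by (simp only: pp_def card.empty) simp
next
  case False
  define k where "k = m - a"
  have m: "m = k + a" using False k_def by simp
  have img: "{S\<in>distinct_parts A m. a \<in> S}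
      = insert a ` (distinct_parts A k - {S\<in>distinct_parts A k. a \<in> S})"
  proof (rule set_eqI, rule iffI)
    fix S assume S: "S \<in> {S\<in>distinct_parts A m. a \<in> S}"
    then have "finite S" "a \<in> S" by (auto simp: distinct_parts_def)
    then have "\<Sum>S = a + \<Sum>(S - {a})" by (simp add: sum.remove)
    then have "S - {a} \<in> distinct_parts A k - {S\<in>distinct_parts A k. a \<in> S}"
      using S m by (auto simp: distinct_parts_def)
    moreover have "S = insert a (S - {a})" using \<open>a \<in> S\<close> by blast
    ultimately show "S \<in> insert a ` (distinct_parts A k - {S\<in>distinct_parts A k. a \<in> S})"
      by blast
  next
    fix S assume "S \<in> insert a ` (distinct_parts A k - {S\<in>distinct_parts A k. a \<in> S})"
    then obtain T where T: "S = insert a T" "T \<in> distinct_parts A k" "a \<notin> T" by blast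
    then have "\<Sum>S = a + \<Sum>T" by (simp add: distinct_parts_def)
    then show "S \<in> {S\<in>distinct_parts A m. a \<in> S}"
      using T a m by (auto simp: distinct_parts_def)
  qed
  have "pp A a m = card (distinct_parts A k - {S\<in>distinct_parts A k. a \<in> S})"
    unfolding pp_def img by (rule card_image) (auto intro!: inj_onI)
  also have "\<dots> = q A k - pp A a k"
    unfolding q_def pp_def by (rule card_Diff_subset) (auto intro: finite_subset[OF _ finite_dp])
  finally have "pp A a m = q A k - pp A a k" .
  moreover have "pp A a k \<le> q A k"
    unfolding q_def pp_def by (rule card_mono[OF finite_dp]) auto
  ultimately show ?thesis using False k_def by simp
qed

lemma cl_rec:
  assumes A: "\<forall>a\<in>A. 0 < a" and n: "0 < n"
  shows "int (cl A n) = (\<Sum>k=0..n-1. int (cl A k) * tau_s A (n - k))"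
proof -
  have "int (cl A n) = (\<Sum>a\<in>{a\<in>A. 0<a \<and> a\<le>n}. int (hh A a n))"
    using cl_split[OF n, of A] by simp
  also have "\<dots> = (\<Sum>a\<in>{a\<in>A. 0<a \<and> a\<le>n}. \<Sum>j=1..n div a. (-1)^(j-1) * int (cl A (n - j*a)))"
  proof (rule sum.cong[OF refl])
    fix a assume a: "a \<in> {a\<in>A. 0<a \<and> a\<le>n}"
    show "int (hh A a n) = (\<Sum>j=1..n div a. (-1)^(j-1) * int (cl A (n - j*a)))"
      by (rule alt_rec[of a "\<lambda>m. int (hh A a m)"]) (use a hh_rec[of a A] in auto)
  qed
  also have "\<dots> = (\<Sum>k=0..n-1. int (cl A k) * tau_s A (n - k))"
    by (rule exchange[OF n A])
  finally show ?thesis .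
qed

lemma Nq_rec:
  assumes A: "\<forall>a\<in>A. 0 < a" and n: "0 < n"
  shows "int (Nq A n) = (\<Sum>k=0..n-1. int (q A k) * tau_s A (n - k))"
proof -
  have "int (Nq A n) = (\<Sum>a\<in>{a\<in>A. 0<a \<and> a\<le>n}. int (pp A a n))"
    using Nq_split[of A n] by simp
  also have "\<dots> = (\<Sum>a\<in>{a\<in>A. 0<a \<and> a\<le>n}. \<Sum>j=1..n div a. (-1)^(j-1) * int (q A (n - j*a)))"
  proof (rule sum.cong[OF refl])
    fix a assume a: "a \<in> {a\<in>A. 0<a \<and> a\<le>n}"
    show "int (pp A a n) = (\<Sum>j=1..n div a. (-1)^(j-1) * int (q A (n - j*a)))"
      by (rule alt_rec[of a "\<lambda>m. int (pp A a m)"]) (use a pp_rec[of a A] in auto)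
  qed
  also have "\<dots> = (\<Sum>k=0..n-1. int (q A k) * tau_s A (n - k))"
    by (rule exchange[OF n A])
  finally show ?thesis .
qed

lemma cl0: "cl A 0 = 1"
proof -
  have "carlitz_comps A 0 = {[]}"
    by (auto simp: carlitz_comps_def sum_list_eq_0_iff) (metis gr_implies_not0 list.set_intros(1) neq_Nil_conv)
  then show ?thesis by (simp add: cl_def)
qed

theorem theorem7:
  fixes A :: "nat set" and n :: nat
  assumes "A \<noteq> {}" and "\<forall>a\<in>A. 0 < a" and "0 < n"
  shows "(int (cl A n) = (\<Sum>k=0..n-1. int (cl A k) * tau_s A (n - k))) \<and>
         ((\<Sum>k=0..n. int (cl A k) * int (q A (n - k)))
           - (\<Sum>t=0..n-1. int (cl A t) * int (Nq A (n - t))) = int (q A n))"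
proof
  note A = assms(2) and n = assms(3)
  show "int (cl A n) = (\<Sum>k=0..n-1. int (cl A k) * tau_s A (n - k))" by (rule cl_rec[OF A n])
  define I where "I = {0..n-1}"
  have "(\<Sum>t=0..n-1. int (cl A t) * int (Nq A (n - t)))
      = (\<Sum>t\<in>I. \<Sum>j\<in>{j\<in>I. t + j < n}. int (cl A t) * (int (q A j) * tau_s A (n - t - j)))"
  proof (rule sum.cong)
    fix t assume t: "t \<in> I"
    have "{j\<in>I. t + j < n} = {0..n - t - 1}" using t n by (auto simp: I_def)
    moreover have "n - t > 0" using t n by (auto simp: I_def)
    ultimately show "int (cl A t) * int (Nq A (n - t)) = (\<Sum>j\<in>{j\<in>I. t + j < n}. int (cl A t) * (int (q A j) * tau_s A (n - t - j)))"
      using Nq_rec[OF A, of "n - t"] by (simp add: sum_distrib_left algebra_simps)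
  qed (simp add: I_def)
  also have "\<dots> = (\<Sum>j\<in>I. \<Sum>t\<in>{t\<in>I. t + j < n}. int (cl A t) * (int (q A j) * tau_s A (n - t - j)))"
    by (rule sum.swap_restrict) (auto simp: I_def)
  also have "\<dots> = (\<Sum>j\<in>I. int (q A j) * int (cl A (n - j)))"
  proof (rule sum.cong[OF refl])
    fix j assume j: "j \<in> I"
    have "{t\<in>I. t + j < n} = {0..n - j - 1}" using j n by (auto simp: I_def)
    moreover have "\<And>t. n - t - j = n - j - t" by simp
    ultimately show "(\<Sum>t\<in>{t\<in>I. t + j < n}. int (cl A t) * (int (q A j) * tau_s A (n - t - j))) = int (q A j) * int (cl A (n - j))"
      using cl_rec[OF A, of "n - j"] j n by (simp add: I_def sum_distrib_left algebra_simps)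
  qed
  also have "\<dots> = (\<Sum>k=1..n. int (cl A k) * int (q A (n - k)))"
    by (rule sum.reindex_bij_witness[where i="\<lambda>k. n - k" and j="\<lambda>j. n - j"]) (use n in \<open>auto simp: I_def\<close>)
  finally have E: "(\<Sum>t=0..n-1. int (cl A t) * int (Nq A (n - t))) = (\<Sum>k=1..n. int (cl A k) * int (q A (n - k)))" .
  have "(\<Sum>k=0..n. int (cl A k) * int (q A (n - k))) = int (cl A 0) * int (q A n) + (\<Sum>k=Suc 0..n. int (cl A k) * int (q A (n - k)))"
    by (subst sum.atLeast_Suc_atMost) simp_all
  then show "(\<Sum>k=0..n. int (cl A k) * int (q A (n - k))) - (\<Sum>t=0..n-1. int (cl A t) * int (Nq A (n - t))) = int (q A n)"
    using E by (simp add: cl0)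
qed

end
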